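(* Let $p,m\ge1$ be integers with $p+\frac m2>1$. Then the minimal operator $\mathbb{H}$ generated by the generalized Heun operator $H^{p,m}$ in $\mathbb{B}_p$ is completely indeterminate: its deficiency indices satisfy $n_+(\mathbb{H})=n_-(\mathbb{H})=m$.
   Context: $\mathbb{B}$ is the Bargmann space of entire functions $\varphi$ with $\frac1\pi\int_{\mathbb{C}}|\varphi|^2e^{-|z|^2}dxdy<\infty$, orthonormal basis $e_k(z)=z^k/\sqrt{k!}$. Annihilation and creation operators: $A\varphi=\varphi'$, $A^*\varphi=z\varphi$. The generalized Heun operator is $H^{p,m}=A^{*p}(A^m+A^{*m})A^p$, i.e. $H^{p,m}\varphi=z^p\varphi^{(p+m)}+z^{p+m}\varphi^{(p)}$; on the basis: $H^{p,m}e_k=0$ for $k<p$; $H^{p,m}e_k=\frac{\sqrt{k!(k+m)!}}{(k-p)!}e_{k+m}$ for $p\le k<p+m$; $H^{p,m}e_k=\frac{\sqrt{k!(k-m)!}}{(k-p-m)!}e_{k-m}+\frac{\sqrt{k!(k+m)!}}{(k-p)!}e_{k+m}$ for $k\ge p+m$. $\mathbb{B}_p=\{\varphi\in\mathbb{B}:\varphi(0)=\varphi'(0)=\dots=\varphi^{(p-1)}(0)=0\}$, the closed span of $\{e_k\}_{k\ge p}$. $\mathbb{H}$ is the closure in $\mathbb{B}_p$ of the restriction of $H^{p,m}$ to polynomials lying in $\mathbb{B}_p$; it is a closed symmetric operator. Deficiency indices: $n_\pm(\mathbb{H})=\dim\ker(\mathbb{H}^*\mp iI)$. A closed symmetric operator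 whose block Jacobi matrix has $m\times m$ blocks is called completely indeterminate if $n_+=n_-=m$. *)

theory Defs
  imports "HOL-Analysis.Analysis" "HOL-Library.Function_Algebras"
begin

text \<open>Model: the Bargmann space is identified (unitarily) with l2(N) via the orthonormal
basis e_k = z^k / sqrt(k!); an element phi = sum c_k e_k is its coefficient sequence c.\<close>

definition l2 :: "(nat \<Rightarrow> complex) set" where
  "l2 = {c. summable (\<lambda>k. (cmod (c k))\<^sup>2)}"

definition l2_norm :: "(nat \<Rightarrow> complex) \<Rightarrow> real" where
  "l2_norm c = sqrt (\<Sum>k. (cmod (c k))\<^sup>2)"

definition l2_inner :: "(nat \<Rightarrow> complex) \<Rightarrow> (nat \<Rightarrow> complex) \<Rightarrow> complex" where
  "l2_inner c d = (\<Sum>k. c k * cnj (d k))"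

definition Bp :: "nat \<Rightarrow> (nat \<Rightarrow> complex) set" where
  "Bp p = {c \<in> l2. \<forall>k<p. c k = 0}"

text \<open>Polynomials lying in B_p: finitely supported coefficient sequences vanishing below p.\<close>
definition poly_Bp :: "nat \<Rightarrow> (nat \<Rightarrow> complex) set" where
  "poly_Bp p = {c. finite {k. c k \<noteq> 0} \<and> (\<forall>k<p. c k = 0)}"

text \<open>Matrix entries: H e_k = heun_up p m k * e_(k+m) + heun_down p m k * e_(k-m).\<close>
definition heun_up :: "nat \<Rightarrow> nat \<Rightarrow> nat \<Rightarrow> complex" where
  "heun_up p m k = (if p \<le> k then
      complex_of_real (sqrt (fact k * fact (k + m)) / fact (k - p)) else 0)"

definition heun_down :: "nat \<Rightarrow> nat \<Rightarrow> nat \<Rightarrow> complex" where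
  "heun_down p m k = (if p + m \<le> k then
      complex_of_real (sqrt (fact k * fact (k - m)) / fact (k - p - m)) else 0)"

definition heun_apply :: "nat \<Rightarrow> nat \<Rightarrow> (nat \<Rightarrow> complex) \<Rightarrow> (nat \<Rightarrow> complex)" where
  "heun_apply p m c j =
     (if m \<le> j then heun_up p m (j - m) * c (j - m) else 0)
     + heun_down p m (j + m) * c (j + m)"

definition heun_min_graph :: "nat \<Rightarrow> nat \<Rightarrow> ((nat \<Rightarrow> complex) \<times> (nat \<Rightarrow> complex)) set" where
  "heun_min_graph p m = {(f, g). f \<in> Bp p \<and> g \<in> Bp p \<and>
      (\<exists>u. (\<forall>n. u n \<in> poly_Bp p) \<and>
           (\<lambda>n. l2_norm (u n - f)) \<longlonglongrightarrow> 0 \<and>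
           (\<lambda>n. l2_norm (heun_apply p m (u n) - g)) \<longlonglongrightarrow> 0)}"

definition heun_adj_graph :: "nat \<Rightarrow> nat \<Rightarrow> ((nat \<Rightarrow> complex) \<times> (nat \<Rightarrow> complex)) set" where
  "heun_adj_graph p m = {(g, h). g \<in> Bp p \<and> h \<in> Bp p \<and>
      (\<forall>(f, u) \<in> heun_min_graph p m. l2_inner u g = l2_inner f h)}"

definition seq_scale :: "complex \<Rightarrow> (nat \<Rightarrow> complex) \<Rightarrow> (nat \<Rightarrow> complex)" where
  "seq_scale a c = (\<lambda>k. a * c k)"

definition heun_adj_kernel :: "nat \<Rightarrow> nat \<Rightarrow> complex \<Rightarrow> (nat \<Rightarrow> complex) set" where
  "heun_adj_kernel p m lam = {g. (g, seq_scale lam g) \<in> heun_adj_graph p m}"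

definition def_plus :: "nat \<Rightarrow> nat \<Rightarrow> nat" where
  "def_plus p m = vector_space.dim seq_scale (heun_adj_kernel p m \<i>)"

definition def_minus :: "nat \<Rightarrow> nat \<Rightarrow> nat" where
  "def_minus p m = vector_space.dim seq_scale (heun_adj_kernel p m (- \<i>))"

end

theory Submission
  imports Defs
begin


definition L :: "nat \<Rightarrow> nat \<Rightarrow> real" where
  "L n s = (\<Prod>i<n. real (s + 1 + i))"

lemma L_pos: "L n s > 0"
  unfolding L_def by (rule prod_pos) auto

lemma L_ge1: "L n s \<ge> 1"
  unfolding L_def by (rule prod_ge_1) auto

lemma L_ge: "n \<ge> 1 \<Longrightarrow> L n s \<ge> real s + 1"
proof (induction n)
  case 0 then show ?case by simp
next
  case (Suc n)
  have "L (Suc n) s = L n s * real (s + 1 + n)" unfolding L_def by simp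
  also have "\<dots> \<ge> 1 * (real s + 1)"
    by (rule mult_mono) (use L_ge1[of n s] in auto)
  finally show ?case by simp
qed

lemma L_lc: "L n s * L n (s + 2*m) \<le> (L n (s + m))\<^sup>2"
proof -
  have "L n s * L n (s + 2*m) = (\<Prod>i<n. real (s + 1 + i) * real (s + 2*m + 1 + i))"
    unfolding L_def by (simp add: prod.distrib)
  also have "\<dots> \<le> (\<Prod>i<n. (real (s + m + 1 + i))\<^sup>2)"
  proof (rule prod_mono, safe)
    fix i
    show "0 \<le> real (s + 1 + i) * real (s + 2 * m + 1 + i)" by simp
    show "real (s + 1 + i) * real (s + 2 * m + 1 + i) \<le> (real (s + m + 1 + i))\<^sup>2"
      by (simp add: power2_eq_square algebra_simps)
  qed
  also have "\<dots> = (L n (s + m))\<^sup>2"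
    unfolding L_def by (simp add: prod_power_distrib)
  finally show ?thesis .
qed

lemma L_rat: "L n (s + m) \<le> (real m + 1) ^ n * L n s"
proof -
  have "L n (s + m) \<le> (\<Prod>i<n. (real m + 1) * real (s + 1 + i))"
    unfolding L_def
  proof (rule prod_mono, safe)
    fix i
    show "0 \<le> real (s + m + 1 + i)" by simp
    have "real (s + m + 1 + i) = real m + real (s + 1 + i)" by simp
    also have "\<dots> \<le> real m * real (s + 1 + i) + real (s + 1 + i)"
      by (simp add: algebra_simps)
    finally show "real (s + m + 1 + i) \<le> (real m + 1) * real (s + 1 + i)"
      by (simp add: algebra_simps)
  qed
  also have "\<dots> = (real m + 1) ^ n * L n s"
    unfolding L_def by (simp add: prod.distrib)
  finally show ?thesis .
qed

lemma fact_L: "(fact (a + n) :: real) = fact a * L n a"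
proof (induction n)
  case 0 then show ?case by (simp add: L_def)
next
  case (Suc n)
  have "(fact (a + Suc n) :: real) = real (a + n + 1) * fact (a + n)"
    by (simp add: fact_Suc)
  also have "\<dots> = fact a * (L n a * real (a + 1 + n))"
    using Suc by (simp add: algebra_simps)
  also have "L n a * real (a + 1 + n) = L (Suc n) a" unfolding L_def by simp
  finally show ?case .
qed



lemma abstract_l2:
  fixes b :: "nat \<Rightarrow> real" and y :: "nat \<Rightarrow> complex" and m :: nat and C :: real and lam :: complex
  assumes m1: "m \<ge> 1" and bpos: "\<And>t. b t > 0"
   and lc: "\<And>t. b t * b (t + 2*m) \<le> (b (t+m))\<^sup>2"
   and rat: "\<And>t. b (t+m) \<le> C * b t"
   and sb: "summable (\<lambda>t. 1 / b t)"
   and rec: "\<And>t. of_real (b (t+m)) * y (t + 2*m) + of_real (b t) * y t = lam * y (t+m)"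
  shows "summable (\<lambda>t. (cmod (y t))\<^sup>2)"
proof -
  define s where "s t = sqrt (b t) * cmod (y t)" for t
  define D where "D = cmod lam * sqrt C"
  define e where "e t = D / b t" for t
  have C0: "C > 0"
  proof -
    have "0 < b (0+m)" by (rule bpos)
    also have "\<dots> \<le> C * b 0" by (rule rat)
    finally show ?thesis using bpos[of 0] by (simp add: zero_less_mult_iff)
  qed
  have s0: "s t \<ge> 0" for t unfolding s_def using bpos[of t] by simp
  have e0: "e t \<ge> 0" for t unfolding e_def D_def using bpos[of t] C0 by simp
  have step: "s (t + 2*m) \<le> s t + e (t+m) * s (t+m)" for t
  proof -
    have "of_real (b (t+m)) * y (t + 2*m) = lam * y (t+m) - of_real (b t) * y t"
      using rec[of t] by (simp add: algebra_simps)
    hence "b (t+m) * cmod (y (t+2*m)) = cmod (lam * y (t+m) - of_real (b t) * y t)"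
      using bpos[of "t+m"] by (metis abs_of_pos norm_mult norm_of_real)
    also have "\<dots> \<le> cmod lam * cmod (y (t+m)) + b t * cmod (y t)"
      using bpos[of t] by (metis abs_of_pos norm_mult norm_of_real norm_triangle_ineq4)
    finally have y2': "cmod (y (t+2*m)) \<le> (cmod lam * cmod (y (t+m)) + b t * cmod (y t)) / b (t+m)"
      using bpos[of "t+m"] by (simp add: pos_le_divide_eq mult.commute)
    have y2: "cmod (y (t+2*m)) \<le> (b t / b (t+m)) * cmod (y t) + (cmod lam / b (t+m)) * cmod (y (t+m))"
      using y2' by (simp add: add_divide_distrib)
    have t1: "sqrt (b (t + 2*m)) * (b t / b (t+m)) \<le> sqrt (b t)"
    proof -
      have "(sqrt (b (t + 2*m)) * (b t / b (t+m)))\<^sup>2 = b (t+2*m) * (b t)\<^sup>2 / (b (t+m))\<^sup>2"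
        using bpos[of "t+2*m"] by (simp add: power_mult_distrib power_divide)
      also have "\<dots> \<le> b t"
      proof -
        have "b (t+2*m) * (b t)\<^sup>2 = b t * (b t * b (t+2*m))" by (simp add: power2_eq_square)
        also have "\<dots> \<le> b t * (b (t+m))\<^sup>2"
          using lc[of t] bpos[of t] by (intro mult_left_mono) auto
        finally show ?thesis using bpos[of "t+m"] by (simp add: pos_divide_le_eq)
      qed
      finally have "(sqrt (b (t + 2*m)) * (b t / b (t+m)))\<^sup>2 \<le> (sqrt (b t))\<^sup>2"
        using bpos[of t] by simp
      thus ?thesis by (rule power2_le_imp_le) (use bpos[of t] in simp)
    qed
    have t2: "sqrt (b (t + 2*m)) * (cmod lam / b (t+m)) * cmod (y (t+m)) \<le> e (t+m) * s (t+m)"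
    proof -
      have "sqrt (b (t + 2*m)) \<le> sqrt C * sqrt (b (t+m))"
        using rat[of "t+m"] by (simp add: real_sqrt_mult[symmetric] mult_2 add.assoc)
      hence "sqrt (b (t + 2*m)) * (cmod lam / b (t+m)) * cmod (y (t+m)) \<le>
             sqrt C * sqrt (b (t+m)) * (cmod lam / b (t+m)) * cmod (y (t+m))"
        using bpos[of "t+m"] by (intro mult_right_mono) auto
      also have "\<dots> = e (t+m) * s (t+m)"
        unfolding e_def s_def D_def by (simp add: mult_ac)
      finally show ?thesis .
    qed
    have "s (t + 2*m) \<le> sqrt (b (t + 2*m)) * ((b t / b (t+m)) * cmod (y t) + (cmod lam / b (t+m)) * cmod (y (t+m)))"
      unfolding s_def by (rule mult_left_mono[OF y2]) (use bpos[of "t+2*m"] in simp)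
    also have "\<dots> = sqrt (b (t + 2*m)) * (b t / b (t+m)) * cmod (y t) + sqrt (b (t + 2*m)) * (cmod lam / b (t+m)) * cmod (y (t+m))"
      by (simp add: algebra_simps)
    also have "\<dots> \<le> sqrt (b t) * cmod (y t) + e (t+m) * s (t+m)"
      by (intro add_mono t2 mult_right_mono t1) auto
    finally show ?thesis unfolding s_def .
  qed
  define U0 where "U0 = (\<Sum>i\<le>2*m. s i)"
  define S where "S n = (\<Sum>k<n. e (k + 1 - m))" for n
  have U00: "U0 \<ge> 0" unfolding U0_def using s0 by (simp add: sum_nonneg)
  have S0: "S n \<ge> 0" for n unfolding S_def using e0 by (simp add: sum_nonneg)
  have small: "s i \<le> U0 * exp (S n)" if "i \<le> 2*m" for i n
  proof -
    have "s i \<le> U0" unfolding U0_def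
      using that s0 by (intro member_le_sum) auto
    also have "\<dots> \<le> U0 * exp (S n)" using U00 S0[of n]
      by (metis mult_left_mono mult.right_neutral one_le_exp_iff)
    finally show ?thesis .
  qed
  have main: "\<forall>i\<le>n. s i \<le> U0 * exp (S n)" for n
  proof (induction n)
    case 0 then show ?case using small by auto
  next
    case (Suc n)
    show ?case
    proof (cases "Suc n \<le> 2*m")
      case True then show ?thesis using small by auto
    next
      case False
      have SS: "S (Suc n) = S n + e (n + 1 - m)" unfolding S_def by simp
      have mono: "U0 * exp (S n) \<le> U0 * exp (S (Suc n))"
        using U00 e0 SS by (intro mult_left_mono) auto
      show ?thesis
      proof (intro allI impI)
        fix i assume i: "i \<le> Suc n"
        show "s i \<le> U0 * exp (S (Suc n))"
        proof (cases "i \<le> n")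
          case True thus ?thesis using Suc.IH mono by force
        next
          case False
          hence iS: "i = Suc n" using i by simp
          define t where "t = Suc n - 2*m"
          have tn: "Suc n = t + 2*m" "t + m \<le> n" "t \<le> n" "t + m = n + 1 - m"
            using \<open>\<not> Suc n \<le> 2*m\<close> m1 unfolding t_def by auto
          have "s i \<le> s t + e (t+m) * s (t+m)" using step[of t] iS tn(1) by (simp only: add_Suc_right[symmetric] Suc_eq_plus1)
          also have "\<dots> \<le> U0 * exp (S n) + e (t+m) * (U0 * exp (S n))"
            using Suc.IH tn e0 by (intro add_mono mult_left_mono) auto
          also have "\<dots> = U0 * exp (S n) * (1 + e (t+m))" by (simp add: algebra_simps)
          also have "\<dots> \<le> U0 * exp (S n) * exp (e (t+m))"
            using U00 by (intro mult_left_mono) (auto simp: exp_ge_add_one_self add.commute)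
          also have "\<dots> = U0 * exp (S (Suc n))" using SS tn by (simp add: exp_add add.commute[of t m])
          finally show ?thesis .
        qed
      qed
    qed
  qed
  have sume: "summable (\<lambda>k. e (k + 1 - m))"
  proof -
    have "summable (\<lambda>k. D * (1 / b k))" using sb by (rule summable_mult)
    hence "summable (\<lambda>k. e k)" unfolding e_def by simp
    hence "summable (\<lambda>k. e (k + 1))" by (subst summable_iff_shift) 
    hence "summable (\<lambda>k. e (k + m + 1 - m))" by simp
    thus ?thesis by (subst summable_iff_shift[symmetric, of _ m])
  qed
  define K where "K = U0 * exp (suminf (\<lambda>k. e (k + 1 - m)))"
  have sK: "s i \<le> K" for i
  proof -
    have "s i \<le> U0 * exp (S i)" using main[of i] by simp
    also have "\<dots> \<le> K" unfolding K_def S_def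
      using U00 e0 sume by (intro mult_left_mono) (auto intro!: sum_le_suminf)
    finally show ?thesis .
  qed
  show ?thesis
  proof (rule summable_comparison_test')
    show "summable (\<lambda>t. K\<^sup>2 * (1 / b t))" using sb by (rule summable_mult)
    fix t
    have "(cmod (y t))\<^sup>2 = (s t)\<^sup>2 / b t" unfolding s_def using bpos[of t]
      by (simp add: power_mult_distrib)
    also have "\<dots> \<le> K\<^sup>2 / b t"
      using sK[of t] s0[of t] bpos[of t] by (intro divide_right_mono power_mono) auto
    finally show "norm ((cmod (y t))\<^sup>2) \<le> K\<^sup>2 * (1 / b t)" by simp
  qed
qed



lemma summable_ev0: "(\<And>k. k \<ge> N \<Longrightarrow> f k = 0) \<Longrightarrow> summable (f :: nat \<Rightarrow> 'a::real_normed_vector)"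
  by (rule sums_summable[OF sums_finite[of "{..<N}"]]) (auto simp: not_less)

lemma l2_ev0: "(\<And>k. k \<ge> N \<Longrightarrow> c k = 0) \<Longrightarrow> c \<in> l2"
  unfolding l2_def by (auto intro: summable_ev0[of N])

lemma poly_ev0: "c \<in> poly_Bp p \<Longrightarrow> \<exists>N. \<forall>k\<ge>N. c k = 0"
proof -
  assume "c \<in> poly_Bp p"
  hence "finite {k. c k \<noteq> 0}" unfolding poly_Bp_def by simp
  then obtain N where "\<forall>n\<in>{k. c k \<noteq> 0}. n < N" using finite_nat_set_iff_bounded by blast
  thus ?thesis by (metis mem_Collect_eq not_le)
qed

lemma l2_scale: "c \<in> l2 \<Longrightarrow> seq_scale a c \<in> l2"
  unfolding l2_def seq_scale_def by (simp add: norm_mult power_mult_distrib summable_mult)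

lemma sq_bound2: "2 * (x::real) * y \<le> x\<^sup>2 + y\<^sup>2"
proof -
  have "0 \<le> (x - y)\<^sup>2" by simp
  thus ?thesis by (simp add: power2_diff)
qed

lemma sq_bound: "(x::real) \<ge> 0 \<Longrightarrow> y \<ge> 0 \<Longrightarrow> x * y \<le> x\<^sup>2 + y\<^sup>2"
proof -
  assume "x \<ge> 0" "y \<ge> 0"
  hence "0 \<le> x * y" by simp
  thus ?thesis using sq_bound2[of x y] by linarith
qed

lemma l2_diff: "c \<in> l2 \<Longrightarrow> d \<in> l2 \<Longrightarrow> c - d \<in> l2"
  unfolding l2_def
proof (simp, rule summable_comparison_test')
  assume "summable (\<lambda>k. (cmod (c k))\<^sup>2)" "summable (\<lambda>k. (cmod (d k))\<^sup>2)"
  thus "summable (\<lambda>k. 2 * (cmod (c k))\<^sup>2 + 2 * (cmod (d k))\<^sup>2)"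
    by (intro summable_add summable_mult)
  fix k
  have "cmod (c k - d k) \<le> cmod (c k) + cmod (d k)" by (rule norm_triangle_ineq4)
  hence "(cmod (c k - d k))\<^sup>2 \<le> (cmod (c k) + cmod (d k))\<^sup>2" by (intro power_mono) auto
  also have "\<dots> \<le> 2 * (cmod (c k))\<^sup>2 + 2 * (cmod (d k))\<^sup>2"
    using sq_bound2[of "cmod (c k)" "cmod (d k)"] by (simp add: power2_sum)
  finally show "norm ((cmod (c k - d k))\<^sup>2) \<le> 2 * (cmod (c k))\<^sup>2 + 2 * (cmod (d k))\<^sup>2" by simp
qed

lemma l2_prod_summable:
  assumes "c \<in> l2" "d \<in> l2"
  shows "summable (\<lambda>k. cmod (c k) * cmod (d k))" "summable (\<lambda>k. c k * cnj (d k))"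
proof -
  show s: "summable (\<lambda>k. cmod (c k) * cmod (d k))"
  proof (rule summable_comparison_test')
    show "summable (\<lambda>k. (cmod (c k))\<^sup>2 + (cmod (d k))\<^sup>2)"
      using assms unfolding l2_def by (intro summable_add) auto
    fix k show "norm (cmod (c k) * cmod (d k)) \<le> (cmod (c k))\<^sup>2 + (cmod (d k))\<^sup>2"
      using sq_bound[of "cmod (c k)" "cmod (d k)"] by simp
  qed
  show "summable (\<lambda>k. c k * cnj (d k))"
    by (rule summable_norm_cancel) (use s in \<open>simp add: norm_mult\<close>)
qed

lemma l2_CS:
  assumes "c \<in> l2" "d \<in> l2"
  shows "cmod (l2_inner c d) \<le> l2_norm c * l2_norm d"
proof -
  have sc: "summable (\<lambda>k. (cmod (c k))\<^sup>2)" and sd: "summable (\<lambda>k. (cmod (d k))\<^sup>2)"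
    using assms unfolding l2_def by auto
  note s = l2_prod_summable[OF assms]
  have "cmod (l2_inner c d) \<le> (\<Sum>k. cmod (c k * cnj (d k)))"
    unfolding l2_inner_def by (rule summable_norm) (use s in \<open>simp add: norm_mult\<close>)
  also have "\<dots> = (\<Sum>k. cmod (c k) * cmod (d k))" by (simp add: norm_mult)
  also have "\<dots> \<le> l2_norm c * l2_norm d"
  proof (rule suminf_le_const[OF s(1)])
    fix n
    have "(\<Sum>k<n. cmod (c k) * cmod (d k)) = (\<Sum>k<n. \<bar>cmod (c k)\<bar> * \<bar>cmod (d k)\<bar>)" by simp
    also have "\<dots> \<le> L2_set (\<lambda>k. cmod (c k)) {..<n} * L2_set (\<lambda>k. cmod (d k)) {..<n}"
      by (rule L2_set_mult_ineq)
    also have "\<dots> \<le> l2_norm c * l2_norm d"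
      unfolding L2_set_def l2_norm_def
      using sc sd by (intro mult_mono real_sqrt_le_mono sum_le_suminf)
        (auto intro!: suminf_nonneg sum_nonneg)
    finally show "(\<Sum>k<n. cmod (c k) * cmod (d k)) \<le> l2_norm c * l2_norm d" .
  qed
  finally show ?thesis .
qed

lemma l2_inner_diff:
  assumes "c \<in> l2" "c' \<in> l2" "d \<in> l2"
  shows "l2_inner c d - l2_inner c' d = l2_inner (c - c') d"
  unfolding l2_inner_def
  using suminf_diff[OF l2_prod_summable(2)[OF assms(1,3)] l2_prod_summable(2)[OF assms(2,3)]]
  by (simp add: algebra_simps)

lemma l2_inner_tendsto:
  assumes "\<And>n. x n \<in> l2" "z \<in> l2" "d \<in> l2" "(\<lambda>n. l2_norm (x n - z)) \<longlonglongrightarrow> 0"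
  shows "(\<lambda>n. l2_inner (x n) d) \<longlonglongrightarrow> l2_inner z d"
proof -
  have "(\<lambda>n. l2_inner (x n) d - l2_inner z d) \<longlonglongrightarrow> 0"
  proof (rule Lim_null_comparison)
    show "\<forall>\<^sub>F n in sequentially. norm (l2_inner (x n) d - l2_inner z d) \<le> l2_norm (x n - z) * l2_norm d"
      using l2_CS[OF l2_diff[OF assms(1) assms(2)] assms(3)] l2_inner_diff[OF assms(1,2,3)]
      by (simp add: always_eventually)
    show "(\<lambda>n. l2_norm (x n - z) * l2_norm d) \<longlonglongrightarrow> 0"
      using tendsto_mult_left_zero[OF assms(4)] by simp
  qed
  thus ?thesis using Lim_null by blast
qed



definition ar :: "nat \<Rightarrow> nat \<Rightarrow> nat \<Rightarrow> real" where
  "ar p m j = sqrt (fact j * fact (j + m)) / fact (j - p)"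

lemma ar_pos: "ar p m j > 0"
  unfolding ar_def by (simp add: fact_gt_zero)

lemma up_eq: "heun_up p m j = (if p \<le> j then of_real (ar p m j) else 0)"
  unfolding heun_up_def ar_def by simp

lemma down_eq: "heun_down p m j = (if m \<le> j then heun_up p m (j - m) else 0)"
  unfolding heun_up_def heun_down_def
  by (auto simp: mult.commute diff_commute add.commute)

lemma cnj_up: "cnj (heun_up p m j) = heun_up p m j"
  unfolding up_eq by simp

lemma up_nz: "p \<le> j \<Longrightarrow> heun_up p m j \<noteq> 0"
  unfolding up_eq using ar_pos[of p m j] by simp

lemma apply_eq: "heun_apply p m c j =
   (if m \<le> j then heun_up p m (j - m) * c (j - m) else 0) + heun_up p m j * c (j + m)"
  unfolding heun_apply_def down_eq by simp

lemma apply_below: "j < p \<Longrightarrow> heun_apply p m c j = 0"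
  unfolding apply_eq up_eq by auto

lemma heun_sym:
  assumes N: "\<And>k. k \<ge> N \<Longrightarrow> c k = 0"
  shows "l2_inner (heun_apply p m c) g = l2_inner c (heun_apply p m g)"
proof -
  let ?U = "heun_up p m"
  define X where "X k = (if m \<le> k then ?U (k-m) * c (k-m) else 0) * cnj (g k)" for k
  define Y where "Y k = ?U k * c (k+m) * cnj (g k)" for k
  define Z where "Z k = c k * (if m \<le> k then ?U (k-m) * cnj (g (k-m)) else 0)" for k
  define W where "W k = c k * (?U k * cnj (g (k+m)))" for k
  have sX: "summable X" by (rule summable_ev0[of "N+m"]) (auto simp: X_def N)
  have sY: "summable Y" by (rule summable_ev0[of "N"]) (auto simp: Y_def N)
  have sZ: "summable Z" by (rule summable_ev0[of "N"]) (auto simp: Z_def N)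
  have sW: "summable W" by (rule summable_ev0[of "N"]) (auto simp: W_def N)
  have lhs: "l2_inner (heun_apply p m c) g = suminf X + suminf Y"
    unfolding l2_inner_def apply_eq suminf_add[OF sX sY]
    by (rule arg_cong[where f=suminf]) (auto simp: X_def Y_def algebra_simps)
  have rhs: "l2_inner c (heun_apply p m g) = suminf Z + suminf W"
    unfolding l2_inner_def apply_eq suminf_add[OF sZ sW]
    by (rule arg_cong[where f=suminf]) (auto simp: Z_def W_def algebra_simps cnj_up)
  have XW: "X sums suminf W"
  proof -
    have "(\<lambda>i. X (i + m)) = W" by (auto simp: X_def W_def fun_eq_iff)
    hence "(\<lambda>i. X (i + m)) sums suminf W" using summable_sums[OF sW] by simp
    thus ?thesis by (subst (asm) sums_zero_iff_shift) (auto simp: X_def)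
  qed
  have ZY: "Z sums suminf Y"
  proof -
    have "(\<lambda>i. Z (i + m)) = Y" by (auto simp: Z_def Y_def fun_eq_iff)
    hence "(\<lambda>i. Z (i + m)) sums suminf Y" using summable_sums[OF sY] by simp
    thus ?thesis by (subst (asm) sums_zero_iff_shift) (auto simp: Z_def)
  qed
  show ?thesis using lhs rhs sums_unique[OF XW] sums_unique[OF ZY] by simp
qed

definition delta :: "nat \<Rightarrow> nat \<Rightarrow> complex" where
  "delta j = (\<lambda>k. if k = j then 1 else 0)"

lemma inner_delta: "l2_inner (delta j) x = cnj (x j)"
  unfolding l2_inner_def delta_def
  by (subst suminf_finite[of "{j}"]) auto

lemma l2_norm_zero: "l2_norm (c - c) = 0"
  unfolding l2_norm_def by simp

lemma apply_ev0:
  assumes "\<And>k. k \<ge> N \<Longrightarrow> c k = 0"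
  shows "\<And>k. k \<ge> N + m \<Longrightarrow> heun_apply p m c k = 0"
  unfolding apply_eq using assms by auto

lemma apply_Bp:
  assumes "\<And>k. k \<ge> N \<Longrightarrow> c k = 0"
  shows "heun_apply p m c \<in> Bp p"
  unfolding Bp_def using l2_ev0[OF apply_ev0[OF assms]] apply_below by auto

lemma kernel_sub:
  assumes "g \<in> heun_adj_kernel p m lam"
  shows "g \<in> Bp p \<and> heun_apply p m g = seq_scale lam g"
proof -
  have g: "g \<in> Bp p" and adj: "\<And>f u. (f, u) \<in> heun_min_graph p m \<Longrightarrow> l2_inner u g = l2_inner f (seq_scale lam g)"
    using assms unfolding heun_adj_kernel_def heun_adj_graph_def by auto
  have "heun_apply p m g j = seq_scale lam g j" for j
  proof (cases "j < p")
    case True thus ?thesis using g apply_below unfolding Bp_def seq_scale_def by auto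
  next
    case False
    have ev: "\<And>k. k \<ge> Suc j \<Longrightarrow> delta j k = 0" unfolding delta_def by auto
    have dB: "delta j \<in> Bp p" unfolding Bp_def using l2_ev0[OF ev] False by (auto simp: delta_def)
    have dP: "delta j \<in> poly_Bp p" unfolding poly_Bp_def delta_def using False by auto
    have "(delta j, heun_apply p m (delta j)) \<in> heun_min_graph p m"
      unfolding heun_min_graph_def
      using dB apply_Bp[OF ev] dP l2_norm_zero
      by (auto intro!: exI[of _ "\<lambda>n. delta j"])
    from adj[OF this] have "l2_inner (heun_apply p m (delta j)) g = l2_inner (delta j) (seq_scale lam g)" .
    hence "l2_inner (delta j) (heun_apply p m g) = l2_inner (delta j) (seq_scale lam g)"
      using heun_sym[OF ev] by simp
    hence "cnj (heun_apply p m g j) = cnj (seq_scale lam g j)" by (simp add: inner_delta)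
    thus ?thesis by simp
  qed
  thus ?thesis using g by auto
qed

lemma kernel_sup:
  assumes g: "g \<in> Bp p" and eq: "heun_apply p m g = seq_scale lam g"
  shows "g \<in> heun_adj_kernel p m lam"
proof -
  have gl: "g \<in> l2" using g unfolding Bp_def by auto
  have sB: "seq_scale lam g \<in> Bp p" using g l2_scale unfolding Bp_def seq_scale_def by auto
  have "l2_inner u g = l2_inner f (seq_scale lam g)" if fu: "(f, u) \<in> heun_min_graph p m" for f u
  proof -
    obtain c where c: "\<And>n. c n \<in> poly_Bp p" "(\<lambda>n. l2_norm (c n - f)) \<longlonglongrightarrow> 0"
        "(\<lambda>n. l2_norm (heun_apply p m (c n) - u)) \<longlonglongrightarrow> 0" and fB: "f \<in> Bp p" and uB: "u \<in> Bp p"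
      using fu unfolding heun_min_graph_def by auto
    have ev: "\<exists>N. \<forall>k\<ge>N. c n k = 0" for n using poly_ev0[OF c(1)] .
    have cl: "c n \<in> l2" for n
    proof -
      obtain N where "\<forall>k\<ge>N. c n k = 0" using ev[of n] by blast
      thus ?thesis using l2_ev0[of N "c n"] by simp
    qed
    have hl: "heun_apply p m (c n) \<in> l2" for n
    proof -
      obtain N where "\<forall>k\<ge>N. c n k = 0" using ev[of n] by blast
      thus ?thesis using apply_Bp[of N "c n" p m] unfolding Bp_def by simp
    qed
    have same: "l2_inner (heun_apply p m (c n)) g = l2_inner (c n) (seq_scale lam g)" for n
    proof -
      obtain N where "\<forall>k\<ge>N. c n k = 0" using ev[of n] by blast
      thus ?thesis using heun_sym[of N "c n" p m g] eq by simp
    qed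
    have t1: "(\<lambda>n. l2_inner (heun_apply p m (c n)) g) \<longlonglongrightarrow> l2_inner u g"
      by (rule l2_inner_tendsto[OF hl _ gl c(3)]) (use uB in \<open>auto simp: Bp_def\<close>)
    have t2: "(\<lambda>n. l2_inner (c n) (seq_scale lam g)) \<longlonglongrightarrow> l2_inner f (seq_scale lam g)"
      by (rule l2_inner_tendsto[OF cl _ _ c(2)]) (use fB sB in \<open>auto simp: Bp_def\<close>)
    have t1': "(\<lambda>n. l2_inner (c n) (seq_scale lam g)) \<longlonglongrightarrow> l2_inner u g"
      using t1 unfolding same .
    show ?thesis using LIMSEQ_unique[OF t1' t2] .
  qed
  thus ?thesis unfolding heun_adj_kernel_def heun_adj_graph_def using g sB by auto
qed



lemma ar_L: "ar p m (p + t) = L p t * sqrt (L m (p + t))"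
proof -
  have f1: "(fact (p + t) :: real) = fact t * L p t" using fact_L[of t p] by (simp add: add.commute)
  have f2: "(fact (p + t + m) :: real) = fact (p + t) * L m (p + t)" using fact_L[of "p+t" m] by simp
  have "fact (p + t) * fact (p + t + m) = (fact t * L p t)\<^sup>2 * L m (p + t)"
    using f1 f2 by (simp add: power2_eq_square)
  hence "sqrt (fact (p + t) * fact (p + t + m)) = fact t * L p t * sqrt (L m (p + t))"
    using L_pos[of p t] by (simp add: real_sqrt_mult)
  thus ?thesis unfolding ar_def by simp
qed

lemma summable_b:
  fixes b :: "nat \<Rightarrow> real"
  assumes "\<And>t. b t \<ge> real (t + 1) * sqrt (real (t + 1))"
  shows "summable (\<lambda>t. 1 / b t)"
proof (rule summable_comparison_test')
  have "summable (\<lambda>n. real n powr (- (3/2)))" by (simp add: summable_real_powr_iff)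
  hence "summable (\<lambda>n. real (n + 1) powr (- (3/2)))" by (subst summable_iff_shift[of _ 1]) 
  thus "summable (\<lambda>n. real (n + 1) powr (- (3/2)))" .
  fix t
  have e: "real (t + 1) powr (- (3/2)) = 1 / (real (t + 1) * sqrt (real (t + 1)))"
  proof -
    have h: "(3/2::real) = 1 + 1/2" by simp
    have "real (t + 1) powr (3/2) = real (t + 1) powr 1 * real (t + 1) powr (1/2)"
      by (subst h, subst powr_add) simp
    also have "\<dots> = real (t + 1) * sqrt (real (t + 1))" by (simp add: powr_half_sqrt)
    finally show ?thesis by (simp only: powr_minus inverse_eq_divide)
  qed
  have pos: "0 < real (t + 1) * sqrt (real (t + 1))" by simp
  have bt: "b t > 0" using assms[of t] pos by linarith
  have "1 / b t \<le> 1 / (real (t + 1) * sqrt (real (t + 1)))"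
    by (rule divide_left_mono) (use assms[of t] pos bt in auto)
  thus "norm (1 / b t) \<le> real (t + 1) powr (- (3/2))"
    unfolding e using bt by simp
qed

lemma g_l2:
  fixes g :: "nat \<Rightarrow> complex"
  assumes p1: "p \<ge> 1" and m1: "m \<ge> 1"
    and eq: "heun_apply p m g = seq_scale lam g" and below: "\<And>j. j < p \<Longrightarrow> g j = 0"
  shows "g \<in> Bp p"
proof -
  define b where "b t = ar p m (p + t)" for t
  define C where "C = (real m + 1) ^ p * sqrt ((real m + 1) ^ m)"
  have bL: "b t = L p t * sqrt (L m (p + t))" for t unfolding b_def by (rule ar_L)
  have bpos: "b t > 0" for t unfolding b_def by (rule ar_pos)
  have lc: "b t * b (t + 2*m) \<le> (b (t+m))\<^sup>2" for t
  proof -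
    have q: "sqrt (L m (p + t)) * sqrt (L m (p + (t + 2*m))) \<le> L m (p + (t+m))"
    proof -
      have "sqrt (L m (p + t)) * sqrt (L m (p + (t + 2*m))) = sqrt (L m (p + t) * L m (p + t + 2*m))"
        by (simp add: real_sqrt_mult add.assoc)
      also have "\<dots> \<le> sqrt ((L m (p + t + m))\<^sup>2)"
        by (rule real_sqrt_le_mono) (use L_lc[of m "p+t" m] in simp)
      also have "\<dots> = L m (p + (t+m))" using L_pos[of m "p+(t+m)"] by (simp add: add.assoc)
      finally show ?thesis .
    qed
    have "b t * b (t + 2*m) = (L p t * L p (t + 2*m)) * (sqrt (L m (p + t)) * sqrt (L m (p + (t + 2*m))))"
      unfolding bL by (simp add: mult_ac)
    also have "\<dots> \<le> (L p (t+m))\<^sup>2 * L m (p + (t+m))"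
      using L_lc[of p t m] q less_imp_le[OF L_pos] by (intro mult_mono) simp_all
    also have "\<dots> = (b (t+m))\<^sup>2" unfolding bL using L_pos[of m "p + (t+m)"] by (simp add: power_mult_distrib)
    finally show ?thesis .
  qed
  have rat: "b (t+m) \<le> C * b t" for t
  proof -
    have "sqrt (L m (p + (t+m))) \<le> sqrt ((real m + 1) ^ m) * sqrt (L m (p + t))"
      using L_rat[of m "p+t" m] by (simp add: real_sqrt_mult[symmetric] add.assoc)
    hence "L p (t+m) * sqrt (L m (p + (t+m))) \<le> ((real m + 1) ^ p * L p t) * (sqrt ((real m + 1) ^ m) * sqrt (L m (p + t)))"
      using L_rat[of p t m] less_imp_le[OF L_pos] by (intro mult_mono) simp_all
    thus ?thesis unfolding bL C_def by (simp add: mult_ac)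
  qed
  have sb: "summable (\<lambda>t. 1 / b t)"
  proof (rule summable_b)
    fix t
    have "L p t \<ge> real t + 1" using L_ge[OF p1] .
    moreover have "L m (p + t) \<ge> real t + 1" using L_ge[OF m1, of "p+t"] by simp
    hence "sqrt (L m (p + t)) \<ge> sqrt (real t + 1)" by simp
    ultimately show "b t \<ge> real (t + 1) * sqrt (real (t + 1))" unfolding bL
      by (intro mult_mono) auto
  qed
  have upb: "heun_up p m (p + t) = of_real (b t)" for t unfolding up_eq b_def by simp
  have rec: "of_real (b (t+m)) * g (p + (t + 2*m)) + of_real (b t) * g (p + t) = lam * g (p + (t+m))" for t
  proof -
    have 1: "heun_apply p m g (p + t + m) = lam * g (p + t + m)" using eq unfolding seq_scale_def by metis
    have 2: "heun_apply p m g (p + t + m) = of_real (b t) * g (p + t) + of_real (b (t+m)) * g (p + (t + 2*m))"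
      unfolding apply_eq using upb[of t] upb[of "t+m"] by (simp add: add.assoc mult_2)
    have "of_real (b t) * g (p + t) + of_real (b (t+m)) * g (p + (t + 2*m)) = lam * g (p + t + m)"
      using 1 2 by metis
    moreover have "p + t + m = p + (t + m)" by simp
    ultimately show ?thesis by (metis add.commute)
  qed
  have "summable (\<lambda>t. (cmod (g (p + t)))\<^sup>2)"
    by (rule abstract_l2[OF m1 bpos lc rat sb, of "\<lambda>t. g (p + t)" lam]) (use rec in simp)
  hence "summable (\<lambda>t. (cmod (g (t + p)))\<^sup>2)" by (simp add: add.commute)
  hence "summable (\<lambda>t. (cmod (g t))\<^sup>2)" by (subst (asm) summable_iff_shift)
  thus ?thesis unfolding Bp_def l2_def using below by auto
qed



fun solv :: "nat \<Rightarrow> nat \<Rightarrow> complex \<Rightarrow> (nat \<Rightarrow> complex) \<Rightarrow> nat \<Rightarrow> complex" where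
  "solv p m lam v j = (if j < p then 0 else if j < p + m then v (j - p) else if m = 0 then 0 else
     (lam * solv p m lam v (j - m) - (if m \<le> j - m then heun_up p m (j - m - m) * solv p m lam v (j - m - m) else 0))
       / heun_up p m (j - m))"

declare solv.simps [simp del]

lemma solv_below: "j < p \<Longrightarrow> solv p m lam v j = 0"
  by (subst solv.simps) simp

lemma solv_init: "i < m \<Longrightarrow> solv p m lam v (p + i) = v i"
  by (subst solv.simps) simp

lemma solv_step:
  assumes "m \<ge> 1" "p \<le> i"
  shows "solv p m lam v (i + m) = (lam * solv p m lam v i -
     (if m \<le> i then heun_up p m (i - m) * solv p m lam v (i - m) else 0)) / heun_up p m i"
  using assms by (subst solv.simps[of p m lam v "i+m"]) simp

lemma solv_eq:
  assumes "m \<ge> 1"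
  shows "heun_apply p m (solv p m lam v) = seq_scale lam (solv p m lam v)"
proof (rule ext)
  fix i
  show "heun_apply p m (solv p m lam v) i = seq_scale lam (solv p m lam v) i"
  proof (cases "i < p")
    case True thus ?thesis using apply_below solv_below unfolding seq_scale_def by simp
  next
    case False
    hence nz: "heun_up p m i \<noteq> 0" using up_nz by simp
    have st: "solv p m lam v (i + m) = (lam * solv p m lam v i -
     (if m \<le> i then heun_up p m (i - m) * solv p m lam v (i - m) else 0)) / heun_up p m i"
      using solv_step[OF assms] False by simp
    have "heun_up p m i * solv p m lam v (i + m) = lam * solv p m lam v i -
     (if m \<le> i then heun_up p m (i - m) * solv p m lam v (i - m) else 0)"
      unfolding st using nz by simp
    thus ?thesis unfolding apply_eq seq_scale_def by (cases "m \<le> i") (simp_all add: algebra_simps)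
  qed
qed

lemma uniq:
  assumes m1: "m \<ge> 1"
    and eg: "heun_apply p m g = seq_scale lam g" and eh: "heun_apply p m h = seq_scale lam h"
    and agree: "\<And>j. j < p + m \<Longrightarrow> g j = h j"
  shows "g = h"
proof (rule ext)
  fix j show "g j = h j"
  proof (induction j rule: less_induct)
    case (less j)
    show ?case
    proof (cases "j < p + m")
      case True thus ?thesis using agree by simp
    next
      case False
      define i where "i = j - m"
      have ji: "j = i + m" "p \<le> i" "i < j" "i - m < j" using False m1 unfolding i_def by auto
      have "heun_apply p m g i = lam * g i" using eg unfolding seq_scale_def by metis
      hence 1: "heun_up p m i * g j = lam * g i - (if m \<le> i then heun_up p m (i - m) * g (i - m) else 0)"
        unfolding apply_eq ji(1) by (simp add: algebra_simps)
      have "heun_apply p m h i = lam * h i" using eh unfolding seq_scale_def by metis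
      hence 2: "heun_up p m i * h j = lam * h i - (if m \<le> i then heun_up p m (i - m) * h (i - m) else 0)"
        unfolding apply_eq ji(1) by (simp add: algebra_simps)
      have "heun_up p m i * g j = heun_up p m i * h j"
        unfolding 1 2 using less.IH[OF ji(3)] less.IH[OF ji(4)] by simp
      thus ?thesis using up_nz[OF ji(2)] by simp
    qed
  qed
qed

lemma fun_sum_apply: "(\<Sum>r\<in>A. f r) k = (\<Sum>r\<in>A. f r k)"
  by (induction A rule: infinite_finite_induct) auto

lemma vs_seq: "vector_space seq_scale"
  by unfold_locales (auto simp: seq_scale_def fun_eq_iff algebra_simps)

lemma kernel_eq: "heun_adj_kernel p m lam = {g. g \<in> Bp p \<and> heun_apply p m g = seq_scale lam g}"
  using kernel_sub kernel_sup by blast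

lemma dim_K:
  assumes p1: "p \<ge> 1" and m1: "m \<ge> 1"
  shows "vector_space.dim seq_scale (heun_adj_kernel p m lam) = m"
proof -
  interpret vs: vector_space seq_scale by (rule vs_seq)
  define S where "S r = solv p m lam (delta r)" for r
  define B where "B = S ` {..<m}"
  define K where "K = heun_adj_kernel p m lam"
  have Sval: "S r (p + i) = (if i = r then 1 else 0)" if "i < m" for r i
    unfolding S_def using solv_init[OF that] by (simp add: delta_def)
  have inj: "inj_on S {..<m}"
  proof (rule inj_onI)
    fix r r' assume "r \<in> {..<m}" "r' \<in> {..<m}" "S r = S r'"
    hence "S r (p + r) = S r' (p + r)" "r < m" by auto
    thus "r = r'" using Sval by (metis one_neq_zero)
  qed
  have card: "card B = m" unfolding B_def using card_image[OF inj] by simp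
  have SK: "S r \<in> K" for r
  proof -
    have e: "heun_apply p m (S r) = seq_scale lam (S r)" unfolding S_def by (rule solv_eq[OF m1])
    have "S r \<in> Bp p" by (rule g_l2[OF p1 m1 e]) (simp add: S_def solv_below)
    thus ?thesis unfolding K_def kernel_eq using e by simp
  qed
  have BK: "B \<subseteq> K" unfolding B_def using SK by auto
  have ind: "vs.independent B"
  proof
    assume "vs.dependent B"
    then obtain u v where uv: "v \<in> B" "u v \<noteq> 0" "(\<Sum>v\<in>B. seq_scale (u v) v) = 0"
      using vs.dependent_finite[of B] unfolding B_def by auto
    obtain r0 where r0: "r0 < m" "v = S r0" using uv(1) unfolding B_def by auto
    have "(\<Sum>r<m. seq_scale (u (S r)) (S r)) = 0"
      using uv(3) unfolding B_def by (simp add: sum.reindex[OF inj])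
    hence "(\<Sum>r<m. seq_scale (u (S r)) (S r)) (p + r0) = 0" by simp
    hence "(\<Sum>r<m. u (S r) * S r (p + r0)) = 0" by (simp add: fun_sum_apply seq_scale_def)
    hence "(\<Sum>r<m. u (S r) * (if r0 = r then 1 else 0)) = 0" using Sval[OF r0(1)] by simp
    moreover have "(\<Sum>r<m. u (S r) * (if r0 = r then 1 else 0)) = (\<Sum>r<m. if r0 = r then u (S r) else 0)"
      by (rule sum.cong) auto
    ultimately have "u (S r0) = 0" using r0(1) by simp
    thus False using uv(2) r0(2) by simp
  qed
  have span: "K \<subseteq> vs.span B"
  proof
    fix g assume "g \<in> K"
    hence gB: "g \<in> Bp p" and eg: "heun_apply p m g = seq_scale lam g" unfolding K_def kernel_eq by auto
    define h where "h = (\<Sum>r<m. seq_scale (g (p + r)) (S r))"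
    have hk: "h k = (\<Sum>r<m. g (p + r) * S r k)" for k
      unfolding h_def by (simp add: fun_sum_apply seq_scale_def)
    have hspan: "h \<in> vs.span B" unfolding h_def B_def
      by (intro vs.span_sum vs.span_scale vs.span_base) auto
    have eS: "heun_apply p m (S r) j = lam * S r j" for r j
      using solv_eq[OF m1, of p lam "delta r"] unfolding S_def seq_scale_def by metis
    have eh: "heun_apply p m h = seq_scale lam h"
    proof (rule ext)
      fix j
      have "heun_apply p m h j = (\<Sum>r<m. g (p + r) * heun_apply p m (S r) j)"
        unfolding apply_eq hk by (auto simp: sum_distrib_left sum.distrib algebra_simps)
      also have "\<dots> = lam * h j" unfolding eS hk by (simp add: sum_distrib_left algebra_simps)
      finally show "heun_apply p m h j = seq_scale lam h j" unfolding seq_scale_def .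
    qed
    have agree: "g j = h j" if "j < p + m" for j
    proof (cases "j < p")
      case True
      thus ?thesis using gB unfolding Bp_def hk S_def by (simp add: solv_below)
    next
      case False
      define i where "i = j - p"
      have i: "j = p + i" "i < m" using False that unfolding i_def by auto
      have "h j = (\<Sum>r<m. g (p + r) * (if i = r then 1 else 0))"
        unfolding hk i(1) using Sval[OF i(2)] by simp
      also have "\<dots> = (\<Sum>r<m. if i = r then g (p + r) else 0)"
        by (rule sum.cong) auto
      also have "\<dots> = g j" using i by simp
      finally show ?thesis by simp
    qed
    have "g = h" by (rule uniq[OF m1 eg eh agree])
    thus "g \<in> vs.span B" using hspan by simp
  qed
  show ?thesis using vs.dim_unique[OF BK span ind card] unfolding K_def .
qed

theorem theorem3p5:
  fixes p m :: nat
  assumes "p \<ge> 1" and "m \<ge> 1" and "real p + real m / 2 > 1"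
  shows "def_plus p m = m \<and> def_minus p m = m"
  unfolding def_plus_def def_minus_def using dim_K[OF assms(1,2)] by simp

end
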